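(* Let $w$ be a non-binary word. Then every element of $\mathtt{BR}(w)$ is rich if and only if either $w = a_1a_2\cdots a_k$ where $a_1,\dots,a_k\in\Sigma$ are pairwise distinct letters, or $w = c^{|w|}$ for a single letter $c\in\Sigma$.
   Context: $\Sigma$ is an alphabet; $\Sigma^*$ is the set of finite words over $\Sigma$. For a word $w=w_1\cdots w_n$ ($w_i\in\Sigma$), $|w|=n$ and $w^R=w_n\cdots w_1$; $w$ is a palindrome if $w=w^R$. A factor of $w$ is a word $u$ with $w=puq$ for some words $p,q$. A word $w$ is rich if the number of distinct nonempty palindromic factors of $w$ equals $|w|$ (the maximum possible). $\mathrm{Alph}(w)$ denotes the set of letters occurring in $w$. The block reversal of a nonempty word $w$ is $\mathtt{BR}(w)=\{B_tB_{t-1}\cdots B_1 : w=B_1B_2\cdots B_t,\ t\ge 1,\ B_i\in\Sigma^+\}$. A non-binary word is a nonempty word $w$ with $|\mathrm{Alph}(w)|\neq 2$. *)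

theory Defs
  imports Main "HOL-Library.Sublist"
begin

text \<open>Words over the alphabet 'a are lists. Factors are contiguous sublists.\<close>

definition pal_factors :: "'a list \<Rightarrow> 'a list set" where
  "pal_factors w = {u. u \<noteq> [] \<and> sublist u w \<and> rev u = u}"

definition rich :: "'a list \<Rightarrow> bool" where
  "rich w \<longleftrightarrow> card (pal_factors w) = length w"

definition block_reversal :: "'a list \<Rightarrow> 'a list set" where
  "block_reversal w = {concat (rev Bs) | Bs. Bs \<noteq> [] \<and> concat Bs = w \<and> (\<forall>B\<in>set Bs. B \<noteq> [])}"

definition non_binary :: "'a list \<Rightarrow> bool" where
  "non_binary w \<longleftrightarrow> w \<noteq> [] \<and> card (set w) \<noteq> 2"

end

theory Submission
  imports Defs
begin


lemma pal_finite: "finite (pal_factors v)"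
proof -
  have "pal_factors v \<subseteq> set (sublists v)" by (auto simp: pal_factors_def)
  then show ?thesis using finite_subset by blast
qed

lemma pal_Nil: "pal_factors [] = {}"
  by (auto simp: pal_factors_def)

lemma new_pal_unique:
  assumes "s1 \<in> pal_factors (v@[z]) - pal_factors v" "s2 \<in> pal_factors (v@[z]) - pal_factors v"
    and "length s1 \<le> length s2"
  shows "s1 = s2"
proof -
  have m1: "s1 \<in> pal_factors (v@[z])" "s1 \<notin> pal_factors v" using assms(1) by auto
  have a1: "s1 \<noteq> []" "rev s1 = s1" "sublist s1 (v@[z])" "\<not> sublist s1 v"
    using m1 unfolding pal_factors_def mem_Collect_eq by blast+
  have m2: "s2 \<in> pal_factors (v@[z])" "s2 \<notin> pal_factors v" using assms(2) by auto
  have a2: "s2 \<noteq> []" "rev s2 = s2" "sublist s2 (v@[z])" "\<not> sublist s2 v"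
    using m2 unfolding pal_factors_def mem_Collect_eq by blast+
  have s13: "suffix s1 (v@[z])" using a1(3,4) by (simp add: sublist_snoc)
  have s23: "suffix s2 (v@[z])" using a2(3,4) by (simp add: sublist_snoc)
  have suf: "suffix s1 s2" using suffix_length_suffix[OF s13 s23 assms(3)] .
  then obtain t where t: "s2 = t @ s1" by (auto simp: suffix_def)
  show ?thesis
  proof (cases "t = []")
    case True
    then show ?thesis using t by simp
  next
    case False
    have "s2 = rev s2" using a2(2) by simp
    also have "\<dots> = rev s1 @ rev t" using t by simp
    also have "\<dots> = s1 @ rev t" using a1(2) by simp
    finally have e: "s2 = s1 @ rev t" .
    obtain zs where zs: "v @ [z] = zs @ s2" using s23 by (auto simp: suffix_def)
    have "butlast (v @ [z]) = zs @ butlast s2" using zs a2(1) by (simp add: butlast_append)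
    then have "v = zs @ s1 @ butlast (rev t)" using e False by (simp add: butlast_append)
    then have "sublist s1 v" unfolding sublist_def by blast
    then show ?thesis using a1(4) by simp
  qed
qed


lemma pal_snoc: "card (pal_factors (v@[z])) \<le> Suc (card (pal_factors v))"
proof -
  let ?N = "pal_factors (v@[z]) - pal_factors v"
  have fin: "finite ?N" using pal_finite by blast
  have "\<forall>a\<in>?N. \<forall>b\<in>?N. a = b"
  proof (intro ballI)
    fix a b assume ab: "a \<in> ?N" "b \<in> ?N"
    show "a = b"
    proof (cases "length a \<le> length b")
      case True then show ?thesis using new_pal_unique[OF ab] by blast
    next
      case False then show ?thesis using new_pal_unique[OF ab(2) ab(1)] by simp
    qed
  qed
  then have cN: "card ?N \<le> Suc 0" using fin card_le_Suc0_iff_eq by blast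
  have "pal_factors (v@[z]) \<subseteq> pal_factors v \<union> ?N" by blast
  then have "card (pal_factors (v@[z])) \<le> card (pal_factors v \<union> ?N)"
    using pal_finite by (meson card_mono finite_UnI fin)
  also have "\<dots> \<le> card (pal_factors v) + card ?N" by (rule card_Un_le)
  finally show ?thesis using cN by simp
qed

lemma pal_rev: "pal_factors (rev v) = rev ` pal_factors v"
proof
  show "pal_factors (rev v) \<subseteq> rev ` pal_factors v"
  proof
    fix u assume "u \<in> pal_factors (rev v)"
    then have "rev u \<in> pal_factors v" by (auto simp: pal_factors_def sublist_rev_right)
    then show "u \<in> rev ` pal_factors v" by (metis image_eqI rev_rev_ident)
  qed
next
  show "rev ` pal_factors v \<subseteq> pal_factors (rev v)"
    by (auto simp: pal_factors_def sublist_rev_right)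
qed

lemma card_pal_rev: "card (pal_factors (rev v)) = card (pal_factors v)"
  by (simp add: pal_rev card_image inj_on_def)

lemma pal_Cons: "card (pal_factors (z#v)) \<le> Suc (card (pal_factors v))"
proof -
  have "card (pal_factors (z#v)) = card (pal_factors (rev v @ [z]))"
    by (metis card_pal_rev rev.simps(2) rev_rev_ident)
  also have "\<dots> \<le> Suc (card (pal_factors (rev v)))" by (rule pal_snoc)
  finally show ?thesis by (simp add: card_pal_rev)
qed

lemma pal_bound: "card (pal_factors u) \<le> length u"
proof (induction u rule: rev_induct)
  case Nil then show ?case by (simp add: pal_Nil)
next
  case (snoc x xs) then show ?case using pal_snoc[of xs x] by simp
qed

lemma pal_app_right: "card (pal_factors (u@s)) \<le> card (pal_factors u) + length s"
proof (induction s rule: rev_induct)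
  case Nil then show ?case by simp
next
  case (snoc x xs) then show ?case using pal_snoc[of "u@xs" x] by simp
qed

lemma pal_app_left: "card (pal_factors (p@u)) \<le> card (pal_factors u) + length p"
proof (induction p)
  case Nil then show ?case by simp
next
  case (Cons x xs) then show ?case using pal_Cons[of x "xs@u"] by simp
qed

lemma return_sub:
  assumes "y \<notin> set m" "rev m \<noteq> m"
  shows "pal_factors (y#m@[y]) \<subseteq> pal_factors (y#m)"
proof
  fix u assume u: "u \<in> pal_factors (y#m@[y])"
  then have u1: "u \<noteq> []" "rev u = u" "sublist u ((y#m)@[y])" by (auto simp: pal_factors_def)
  show "u \<in> pal_factors (y#m)"
  proof (cases "sublist u (y#m)")
    case True then show ?thesis using u1 by (auto simp: pal_factors_def)
  next
    case False
    then have "suffix u ((y#m)@[y])" using u1(3) by (simp only: sublist_snoc) simp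
    then have "u = [] \<or> (\<exists>zs. u = zs @ [y] \<and> suffix zs (y#m))" by (simp only: suffix_snoc)
    then obtain zs where zs: "u = zs @ [y]" "suffix zs (y#m)" using u1(1) by blast
    show ?thesis
    proof (cases "zs = []")
      case True then show ?thesis using zs by (auto simp: pal_factors_def)
    next
      case False
      then obtain a zs' where "zs = a # zs'" by (cases zs) auto
      have "hd u = a" using zs(1) \<open>zs = a # zs'\<close> by simp
      moreover have "last u = y" using zs(1) by simp
      moreover have "hd (rev u) = last u" using u1(1) by (simp add: hd_rev)
      ultimately have "a = y" using u1(2) by simp
      have "zs = y#m"
      proof (rule ccontr)
        assume "zs \<noteq> y#m"
        obtain xs where xs: "y # m = xs @ zs" using zs(2) by (auto simp: suffix_def)
        have "xs \<noteq> []" using xs \<open>zs \<noteq> y#m\<close> by auto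
        then obtain x' xs' where "xs = x' # xs'" by (cases xs) auto
        then have "m = xs' @ zs" using xs by simp
        then have "y \<in> set m" using \<open>zs = a # zs'\<close> \<open>a = y\<close> by simp
        then show False using assms(1) by simp
      qed
      then have "rev m = m" using u1(2) zs(1) by simp
      then show ?thesis using assms(2) by simp
    qed
  qed
qed

definition hasRet :: "'a list \<Rightarrow> bool" where
  "hasRet v \<longleftrightarrow> (\<exists>p y m s. v = p @ [y] @ m @ [y] @ s \<and> y \<notin> set m \<and> rev m \<noteq> m)"

lemma hasRet_not_rich:
  assumes "hasRet v" shows "\<not> rich v"
proof -
  obtain p y m s where v: "v = p @ [y] @ m @ [y] @ s" "y \<notin> set m" "rev m \<noteq> m"
    using assms by (auto simp: hasRet_def)
  have "card (pal_factors (y#m@[y])) \<le> card (pal_factors (y#m))"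
    using return_sub[OF v(2,3)] pal_finite card_mono by blast
  also have "\<dots> \<le> Suc (length m)" using pal_bound[of "y#m"] by simp
  finally have c1: "card (pal_factors (y#m@[y])) \<le> Suc (length m)" .
  have "card (pal_factors v) \<le> card (pal_factors ((y#m@[y])@s)) + length p"
    using pal_app_left[of p "(y#m@[y])@s"] v(1) by simp
  also have "\<dots> \<le> card (pal_factors (y#m@[y])) + length s + length p"
    using pal_app_right[of "y#m@[y]" s] by simp
  finally have "card (pal_factors v) < length v" using c1 v(1) by simp
  then show ?thesis by (simp add: rich_def)
qed




lemma BR_intro: "Bs \<noteq> [] \<Longrightarrow> concat Bs = w \<Longrightarrow> (\<forall>B\<in>set Bs. B \<noteq> []) \<Longrightarrow> concat (rev Bs) \<in> block_reversal w"
  unfolding block_reversal_def by blast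

lemma concat_filter_ne: "concat (filter (\<lambda>B. B \<noteq> []) xs) = concat xs"
  by (induct xs) auto

lemma BR_lift:
  assumes "v \<in> block_reversal F"
  shows "C @ v @ A \<in> block_reversal (A @ F @ C)"
proof -
  obtain Bs where Bs: "v = concat (rev Bs)" "Bs \<noteq> []" "concat Bs = F" "\<forall>B\<in>set Bs. B \<noteq> []"
    using assms unfolding block_reversal_def by blast
  let ?Cs = "filter (\<lambda>B. B \<noteq> []) ([A] @ Bs @ [C])"
  have ne: "?Cs \<noteq> []" using Bs(2,4) by (cases Bs) auto
  have c1: "concat ?Cs = A @ F @ C" using Bs(3) by (simp only: concat_filter_ne) simp
  have "concat (rev ?Cs) = concat (filter (\<lambda>B. B \<noteq> []) (rev ([A] @ Bs @ [C])))"
    by (simp add: rev_filter)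
  also have "\<dots> = C @ v @ A" using Bs(1) by (simp only: concat_filter_ne) simp
  finally have eq: "concat (rev ?Cs) = C @ v @ A" .
  have nb: "\<forall>B\<in>set ?Cs. B \<noteq> []" by simp
  have r: "concat (rev ?Cs) \<in> block_reversal (A @ F @ C)" by (rule BR_intro[OF ne c1 nb])
  from r show ?thesis by (simp only: eq)
qed

lemma hasRet_lift: "hasRet v \<Longrightarrow> hasRet (C @ v @ A)"
proof -
  assume "hasRet v"
  then obtain p y m s where "v = p @ [y] @ m @ [y] @ s" "y \<notin> set m" "rev m \<noteq> m"
    by (auto simp: hasRet_def)
  then show "hasRet (C @ v @ A)" unfolding hasRet_def
    by (rule_tac x="C@p" in exI, rule_tac x=y in exI, rule_tac x=m in exI, rule_tac x="s@A" in exI) simp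
qed

lemma comb:
  "3 \<le> card (set F) \<Longrightarrow> \<not> distinct F \<Longrightarrow> \<exists>v\<in>block_reversal F. hasRet v"
proof (induction "length F" arbitrary: F rule: less_induct)
  case less
  have "F \<noteq> []" using less.prems(1) by auto
  then obtain f G where FG: "F = f # G" by (cases F) auto
  have "G \<noteq> []" using less.prems(1) FG by auto
  then obtain M l where GM: "G = M @ [l]" by (cases G rule: rev_exhaust) auto
  define T where "T = M @ [l]"
  define Bt where "Bt = f # M"
  have F1: "F = f # T" using FG GM T_def by simp
  have F2: "F = Bt @ [l]" using FG GM Bt_def by simp
  show ?case
  proof (cases "3 \<le> card (set T) \<and> \<not> distinct T")
    case True
    then obtain v where v: "v \<in> block_reversal T" "hasRet v"
      using less.hyps[of T] F1 by auto
    have "[] @ v @ [f] \<in> block_reversal ([f] @ T @ [])" by (rule BR_lift[OF v(1)])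
    moreover have "hasRet ([] @ v @ [f])" by (rule hasRet_lift[OF v(2)])
    ultimately show ?thesis using F1 by auto
  next
    case nT: False
    show ?thesis
    proof (cases "3 \<le> card (set Bt) \<and> \<not> distinct Bt")
      case True
      then obtain v where v: "v \<in> block_reversal Bt" "hasRet v"
        using less.hyps[of Bt] F2 by auto
      have "[l] @ v @ [] \<in> block_reversal ([] @ Bt @ [l])" by (rule BR_lift[OF v(1)])
      moreover have "hasRet ([l] @ v @ [])" by (rule hasRet_lift[OF v(2)])
      ultimately show ?thesis using F2 by auto
    next
      case nB: False
      have setF1: "set F = insert f (set T)" using F1 by simp
      have setF2: "set F = insert l (set Bt)" using F2 by simp
      have fin: "finite (set T)" "finite (set Bt)" by auto
      show ?thesis
      proof (cases "distinct T")
        case dT: True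
        show ?thesis
        proof (cases "distinct Bt")
          case dB: True
          have dM: "distinct M" "f \<notin> set M" "l \<notin> set M" using dT dB T_def Bt_def by auto
          have "f = l" using less.prems(2) dM F1 T_def by auto
          have "card (set F) = Suc (length M)" using F1 T_def dM \<open>f = l\<close>
            by (simp add: distinct_card)
          then have "length M \<ge> 2" using less.prems(1) by simp
          then obtain a M1 where M1: "M = a # M1" by (cases M) auto
          then have "M1 \<noteq> []" using \<open>length M \<ge> 2\<close> by auto
          then obtain M2 b where M2: "M1 = M2 @ [b]" by (cases M1 rule: rev_exhaust) auto
          have "a \<noteq> b" using dM(1) M1 M2 by auto
          then have "rev M \<noteq> M" using M1 M2 by auto
          moreover have "hasRet F" unfolding hasRet_def
            apply (rule exI[of _ "[]"], rule exI[of _ f], rule exI[of _ M], rule exI[of _ "[]"])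
            using F1 T_def \<open>f = l\<close> dM calculation by simp
          moreover have "F \<in> block_reversal F" using BR_intro[of "[F]" F] \<open>F \<noteq> []\<close> by simp
          ultimately show ?thesis by blast
        next
          case ndB: False
          then have cB: "card (set Bt) < 3" using nB by auto
          have lB: "l \<notin> set Bt"
          proof
            assume "l \<in> set Bt"
            then have "set F = set Bt" using setF2 by auto
            then show False using cB less.prems(1) by simp
          qed
          have "card (set F) = Suc (card (set Bt))" using setF2 lB fin by simp
          then have c2: "card (set Bt) = 2" using cB less.prems(1) by simp
          have dM: "distinct M" "l \<notin> set M" using dT T_def by auto
          have fM: "f \<in> set M" using ndB dM Bt_def by auto
          have "set Bt = set M" using fM Bt_def by auto
          then have "length M = 2" using c2 dM distinct_card by metis
          then obtain a b where M: "M = [a, b]"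
            by (metis (no_types) One_nat_def Suc_1 length_0_conv length_Suc_conv)
          have ab: "a \<noteq> b" "l \<noteq> a" "l \<noteq> b" using dM M by auto
          have "f = a \<or> f = b" using fM M by auto
          then show ?thesis
          proof
            assume fa: "f = a"
            have "F = concat [[f], [f, b, l]]" using F2 Bt_def M fa by simp
            then have "concat (rev [[f], [f, b, l]]) \<in> block_reversal F"
              using BR_intro[of "[[f], [f, b, l]]" F] by simp
            moreover have "hasRet (concat (rev [[f], [f, b, l]]))" unfolding hasRet_def
              apply (rule exI[of _ "[]"], rule exI[of _ f], rule exI[of _ "[b, l]"], rule exI[of _ "[]"])
              using ab fa by auto
            ultimately show ?thesis by blast
          next
            assume fb: "f = b"
            have "F = concat [[f], [a], [f, l]]" using F2 Bt_def M fb by simp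
            then have "concat (rev [[f], [a], [f, l]]) \<in> block_reversal F"
              using BR_intro[of "[[f], [a], [f, l]]" F] by simp
            moreover have "hasRet (concat (rev [[f], [a], [f, l]]))" unfolding hasRet_def
              apply (rule exI[of _ "[]"], rule exI[of _ f], rule exI[of _ "[l, a]"], rule exI[of _ "[]"])
              using ab fb by auto
            ultimately show ?thesis by blast
          qed
        qed
      next
        case ndT: False
        then have cT: "card (set T) < 3" using nT by auto
        have fT: "f \<notin> set T"
        proof
          assume "f \<in> set T"
          then have "set F = set T" using setF1 by auto
          then show False using cT less.prems(1) by simp
        qed
        have "card (set F) = Suc (card (set T))" using setF1 fT fin by simp
        then have c2: "card (set T) = 2" using cT less.prems(1) by simp
        show ?thesis
        proof (cases "distinct Bt")
          case dB: True
          have dM: "distinct M" "f \<notin> set M" using dB Bt_def by auto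
          have lM: "l \<in> set M" using ndT dM T_def by auto
          have "set T = set M" using lM T_def by auto
          then have "length M = 2" using c2 dM distinct_card by metis
          then obtain a b where M: "M = [a, b]"
            by (metis (no_types) One_nat_def Suc_1 length_0_conv length_Suc_conv)
          have ab: "a \<noteq> b" "f \<noteq> a" "f \<noteq> b" using dM M by auto
          have "l = a \<or> l = b" using lM M by auto
          then show ?thesis
          proof
            assume la: "l = a"
            have "F = concat [[f, a], [b], [a]]" using F1 T_def M la by simp
            then have "concat (rev [[f, a], [b], [a]]) \<in> block_reversal F"
              using BR_intro[of "[[f, a], [b], [a]]" F] by simp
            moreover have "hasRet (concat (rev [[f, a], [b], [a]]))" unfolding hasRet_def
              apply (rule exI[of _ "[]"], rule exI[of _ a], rule exI[of _ "[b, f]"], rule exI[of _ "[]"])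
              using ab by auto
            ultimately show ?thesis by blast
          next
            assume lb: "l = b"
            have "F = concat [[f, a, b], [b]]" using F1 T_def M lb by simp
            then have "concat (rev [[f, a, b], [b]]) \<in> block_reversal F"
              using BR_intro[of "[[f, a, b], [b]]" F] by simp
            moreover have "hasRet (concat (rev [[f, a, b], [b]]))" unfolding hasRet_def
              apply (rule exI[of _ "[]"], rule exI[of _ b], rule exI[of _ "[f, a]"], rule exI[of _ "[]"])
              using ab by auto
            ultimately show ?thesis by blast
          qed
        next
          case ndB: False
          then have cB: "card (set Bt) < 3" using nB by auto
          have lB: "l \<notin> set Bt"
          proof
            assume "l \<in> set Bt"
            then have "set F = set Bt" using setF2 by auto
            then show False using cB less.prems(1) by simp
          qed
          have fl: "f \<noteq> l" "f \<notin> set M" "l \<notin> set M" using fT lB T_def Bt_def by auto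
          have "card (set T) = Suc (card (set M))" using T_def fl by simp
          then have "card (set M) = 1" using c2 by simp
          then obtain r where r: "set M = {r}" using card_1_singletonE by blast
          have "\<not> distinct M" using less.prems(2) F1 T_def fl by auto
          then have "length M \<noteq> 1" using \<open>card (set M) = 1\<close> distinct_card
            by (metis card_distinct)
          moreover have "M \<noteq> []" using r by auto
          moreover have "length M \<noteq> 0" using \<open>M \<noteq> []\<close> by simp
          ultimately have "length M \<ge> 2" by linarith
          then obtain M1 r' where M1: "M = M1 @ [r']" by (cases M rule: rev_exhaust) auto
          have "r' = r" using r M1 by auto
          have "M1 \<noteq> []" using M1 \<open>length M \<ge> 2\<close> by auto
          then obtain r'' M2 where M2: "M1 = r'' # M2" by (cases M1) auto
          have "r'' = r" using r M1 M2 by auto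
          have rr: "r \<noteq> f" "r \<noteq> l" using fl r by auto
          have "F = concat [f # r # M2, [r, l]]" using F1 T_def M1 M2 \<open>r' = r\<close> \<open>r'' = r\<close> by simp
          then have "concat (rev [f # r # M2, [r, l]]) \<in> block_reversal F"
            using BR_intro[of "[f # r # M2, [r, l]]" F] by simp
          moreover have "hasRet (concat (rev [f # r # M2, [r, l]]))" unfolding hasRet_def
            apply (rule exI[of _ "[]"], rule exI[of _ r], rule exI[of _ "[l, f]"], rule exI[of _ M2])
            using rr fl by auto
          ultimately show ?thesis by blast
        qed
      qed
    qed
  qed
qed





lemma BR_set_length:
  assumes "v \<in> block_reversal w"
  shows "set v = set w" "length v = length w"
proof -
  obtain Bs where Bs: "v = concat (rev Bs)" "concat Bs = w"
    using assms unfolding block_reversal_def by blast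
  show "set v = set w" using Bs by auto
  have "length v = sum_list (rev (map length Bs))" unfolding Bs(1) by (simp add: length_concat rev_map)
  also have "\<dots> = length w" unfolding Bs(2)[symmetric] by (simp add: length_concat sum_list_rev)
  finally show "length v = length w" .
qed

lemma pal_distinct:
  assumes "distinct v"
  shows "pal_factors v = (\<lambda>x. [x]) ` set v"
proof
  show "pal_factors v \<subseteq> (\<lambda>x. [x]) ` set v"
  proof
    fix u assume "u \<in> pal_factors v"
    then have u: "u \<noteq> []" "sublist u v" "rev u = u" unfolding pal_factors_def by blast+
    then obtain p s where "v = p @ u @ s" unfolding sublist_def by blast
    then have du: "distinct u" "set u \<subseteq> set v" using assms by auto
    obtain a u' where au: "u = a # u'" using u(1) by (cases u) auto
    have "u' = []"
    proof (rule ccontr)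
      assume "u' \<noteq> []"
      then obtain u'' b where "u' = u'' @ [b]" by (cases u' rule: rev_exhaust) auto
      then have e: "u = a # u'' @ [b]" using au by simp
      have h: "hd (rev u) = hd u" using arg_cong[where f=hd, OF u(3)] .
      have "hd (rev u) = last u" using u(1) by (simp add: hd_rev)
      then have "a = b" using h e by simp
      then show False using du(1) e by simp
    qed
    then show "u \<in> (\<lambda>x. [x]) ` set v" using au du(2) by auto
  qed
next
  show "(\<lambda>x. [x]) ` set v \<subseteq> pal_factors v"
  proof
    fix u assume "u \<in> (\<lambda>x. [x]) ` set v"
    then obtain x where x: "u = [x]" "x \<in> set v" by blast
    then obtain p s where "v = p @ x # s" using split_list by metis
    then have "sublist [x] v" unfolding sublist_def by (metis append_Cons append_Nil)
    then show "u \<in> pal_factors v" using x unfolding pal_factors_def by simp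
  qed
qed

lemma rich_distinct:
  assumes "distinct v" shows "rich v"
proof -
  have "card (pal_factors v) = card ((\<lambda>x. [x]) ` set v)" using pal_distinct[OF assms] by simp
  also have "\<dots> = card (set v)" by (rule card_image) (auto simp: inj_on_def)
  also have "\<dots> = length v" using assms by (rule distinct_card)
  finally show ?thesis unfolding rich_def .
qed

lemma pal_replicate:
  "pal_factors (replicate n c) = (\<lambda>k. replicate k c) ` {1..n}"
proof
  show "pal_factors (replicate n c) \<subseteq> (\<lambda>k. replicate k c) ` {1..n}"
  proof
    fix u assume "u \<in> pal_factors (replicate n c)"
    then have u: "u \<noteq> []" "sublist u (replicate n c)" unfolding pal_factors_def by blast+
    have "set u \<subseteq> {c}" using set_mono_sublist[OF u(2)] by auto
    then have "\<forall>y\<in>set u. y = c" by auto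
    then have "replicate (length u) c = u" by (rule replicate_length_same)
    moreover have "length u \<le> n" using sublist_length_le[OF u(2)] by simp
    moreover have "1 \<le> length u" using u(1) by (cases u) auto
    ultimately show "u \<in> (\<lambda>k. replicate k c) ` {1..n}"
      by (intro image_eqI[of _ _ "length u"]) auto
  qed
next
  show "(\<lambda>k. replicate k c) ` {1..n} \<subseteq> pal_factors (replicate n c)"
  proof
    fix u assume "u \<in> (\<lambda>k. replicate k c) ` {1..n}"
    then obtain k where k: "u = replicate k c" "1 \<le> k" "k \<le> n" by auto
    have "replicate n c = replicate k c @ replicate (n - k) c"
      using k by (metis le_add_diff_inverse replicate_add)
    moreover have "sublist (replicate k c) (replicate k c @ replicate (n - k) c)"
      by (rule sublist_append_rightI)
    ultimately have "sublist u (replicate n c)" using k(1) by simp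
    moreover have "u \<noteq> []" using k by auto
    moreover have "rev u = u" using k(1) by simp
    ultimately show "u \<in> pal_factors (replicate n c)" unfolding pal_factors_def by blast
  qed
qed

lemma rich_replicate: "rich (replicate n c)"
proof -
  have "inj_on (\<lambda>k. replicate k c) {1..n}" by (auto simp: inj_on_def)
  then show ?thesis unfolding rich_def pal_replicate by (simp add: card_image)
qed

lemma BR_replicate:
  assumes "v \<in> block_reversal (replicate n c)"
  shows "v = replicate n c"
proof -
  have "set v = set (replicate n c)" "length v = n" using BR_set_length[OF assms] by auto
  then have "\<forall>y\<in>set v. y = c" by auto
  then have "replicate (length v) c = v" by (rule replicate_length_same)
  then show ?thesis using \<open>length v = n\<close> by simp
qed



theorem mainTheorem1:
  fixes w :: "'a list"
  assumes "non_binary w"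
  shows "(\<forall>v\<in>block_reversal w. rich v) \<longleftrightarrow>
         (distinct w \<or> (\<exists>c. w = replicate (length w) c))"
proof
  assume all: "\<forall>v\<in>block_reversal w. rich v"
  show "distinct w \<or> (\<exists>c. w = replicate (length w) c)"
  proof (rule ccontr)
    assume H: "\<not> (distinct w \<or> (\<exists>c. w = replicate (length w) c))"
    have ne: "w \<noteq> []" "card (set w) \<noteq> 2" using assms by (auto simp: non_binary_def)
    have "card (set w) \<noteq> 0" using ne(1) by simp
    moreover have "card (set w) \<noteq> 1"
    proof
      assume "card (set w) = 1"
      then obtain c where "set w = {c}" using card_1_singletonE by blast
      then have "\<forall>y\<in>set w. y = c" by auto
      then have "replicate (length w) c = w" by (rule replicate_length_same)
      then show False using H by metis
    qed
    ultimately have "3 \<le> card (set w)" using ne(2) by linarith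
    moreover have "\<not> distinct w" using H by blast
    ultimately obtain v where "v \<in> block_reversal w" "hasRet v" using comb by blast
    then show False using all hasRet_not_rich by blast
  qed
next
  assume "distinct w \<or> (\<exists>c. w = replicate (length w) c)"
  then show "\<forall>v\<in>block_reversal w. rich v"
  proof
    assume d: "distinct w"
    show ?thesis
    proof
      fix v assume v: "v \<in> block_reversal w"
      have "distinct v" using BR_set_length[OF v] d by (metis card_distinct distinct_card)
      then show "rich v" by (rule rich_distinct)
    qed
  next
    assume "\<exists>c. w = replicate (length w) c"
    then obtain c where c: "w = replicate (length w) c" by blast
    show ?thesis
    proof
      fix v assume v: "v \<in> block_reversal w"
      have "v = replicate (length w) c" using BR_replicate v c by metis
      then show "rich v" using rich_replicate by simp
    qed
  qed
qed

end
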